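(* Let $T=(V,E)$ be a finite rooted tree, $\Pr$ a probability distribution over a finite set of queries, $k$ a positive integer, and let $R^*$ be an optimal solution to the problem of maximizing the benefit $B(R)$ over all $R\subseteq V$ with $|R|\le k$. Let $u\in V$ and let $v\in A(u)\cup\{\epsilon\}$ be the lowest ancestor of $u$ that belongs to $R^*$ (with $v=\epsilon$ if no proper ancestor of $u$ belongs to $R^*$). Let $R^*_u=T(u)\cap R^*$ and $\kappa^*_u=|T(u)\cap R^*|$. Then $R^*_u$ maximizes $B_u(R_u\cup\{v\})$ over all $R_u\subseteq T(u)$ with $|R_u|=\kappa^*_u$, i.e. $$R^*_u\in\arg\max_{R_u\subseteq T(u),\ |R_u|=\kappa^*_u} B_u(R_u\cup\{v\}).$$
   Context: $T=(V,E)$ is a finite rooted tree. $T(u)$ is the set of nodes of the subtree rooted at $u$ (including $u$); $A(u)$ is the set of proper ancestors of $u$. Each non-leaf node is associated with a variable of a finite set $X$; $\mathrm{vars}(u)$ is the set of variables associated with nodes of $T(u)$. Each query $q$ determines $Z_q\subseteq X$. For $R\subseteq V$, $w\in V$: $I_q(w,R)=1$ iff $w\in R$, $\mathrm{vars}(w)\subseteq Z_q$, and no $x\in A(w)\cap R$ has $\mathrm{vars}(x)\subseteq Z_q$; else $0$; $\mathbb{E}[I(w,R)]=\sum_q\Pr(q)I_q(w,R)$. Nodes have partial costs $c(x)$; total cost $C(w)=\sum_{x\in T(w)}c(x)$. Benefit: $B(R)=\sum_{w\in R}\mathbb{E}[I(w,R)]C(w)$. Partial benefit: $B_u(R)=\sum_{w\in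 R\cap T(u)}\mathbb{E}[I(w,R)]C(w)$. $\epsilon$ is an auxiliary symbol not in $V$ meaning "no ancestor"; by convention $B_u(R_u\cup\{\epsilon\}):=B_u(R_u)$. *)

theory Defs
  imports Complex_Main
begin

text \<open>A finite rooted tree is given by a finite node set V, a root r and a parent
  function par (meaningful on V - {r}).  Edges point from a child to its parent.\<close>

definition tree_edges :: "'a set \<Rightarrow> 'a \<Rightarrow> ('a \<Rightarrow> 'a) \<Rightarrow> ('a \<times> 'a) set" where
  "tree_edges V r par = {(w, par w) | w. w \<in> V \<and> w \<noteq> r}"

definition rooted_tree :: "'a set \<Rightarrow> 'a \<Rightarrow> ('a \<Rightarrow> 'a) \<Rightarrow> bool" where
  "rooted_tree V r par \<longleftrightarrow> finite V \<and> r \<in> V \<and> (\<forall>w \<in> V - {r}. par w \<in> V)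
     \<and> (\<forall>w \<in> V. (w, r) \<in> (tree_edges V r par)\<^sup>*)"

definition anc :: "'a set \<Rightarrow> 'a \<Rightarrow> ('a \<Rightarrow> 'a) \<Rightarrow> 'a \<Rightarrow> 'a set" where
  "anc V r par u = {x. (u, x) \<in> (tree_edges V r par)\<^sup>+}"

definition subtree :: "'a set \<Rightarrow> 'a \<Rightarrow> ('a \<Rightarrow> 'a) \<Rightarrow> 'a \<Rightarrow> 'a set" where
  "subtree V r par u = {w \<in> V. w = u \<or> u \<in> anc V r par w}"

definition is_leaf :: "'a set \<Rightarrow> 'a \<Rightarrow> ('a \<Rightarrow> 'a) \<Rightarrow> 'a \<Rightarrow> bool" where
  "is_leaf V r par w \<longleftrightarrow> \<not> (\<exists>w' \<in> V. w' \<noteq> r \<and> par w' = w)"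

definition vars :: "'a set \<Rightarrow> 'a \<Rightarrow> ('a \<Rightarrow> 'a) \<Rightarrow> ('a \<Rightarrow> 'x) \<Rightarrow> 'a \<Rightarrow> 'x set" where
  "vars V r par var u = var ` {w \<in> subtree V r par u. \<not> is_leaf V r par w}"

definition Iq :: "'a set \<Rightarrow> 'a \<Rightarrow> ('a \<Rightarrow> 'a) \<Rightarrow> ('a \<Rightarrow> 'x) \<Rightarrow> 'x set \<Rightarrow> 'a \<Rightarrow> 'a set \<Rightarrow> real" where
  "Iq V r par var Zq w R =
     (if w \<in> R \<and> vars V r par var w \<subseteq> Zq
         \<and> \<not> (\<exists>x \<in> anc V r par w \<inter> R. vars V r par var x \<subseteq> Zq) then 1 else 0)"

definition EI :: "'a set \<Rightarrow> 'a \<Rightarrow> ('a \<Rightarrow> 'a) \<Rightarrow> ('a \<Rightarrow> 'x) \<Rightarrow> 'q set \<Rightarrow> ('q \<Rightarrow> real)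
    \<Rightarrow> ('q \<Rightarrow> 'x set) \<Rightarrow> 'a \<Rightarrow> 'a set \<Rightarrow> real" where
  "EI V r par var Q Pr Z w R = (\<Sum>q\<in>Q. Pr q * Iq V r par var (Z q) w R)"

definition Ctot :: "'a set \<Rightarrow> 'a \<Rightarrow> ('a \<Rightarrow> 'a) \<Rightarrow> ('a \<Rightarrow> real) \<Rightarrow> 'a \<Rightarrow> real" where
  "Ctot V r par c w = (\<Sum>x\<in>subtree V r par w. c x)"

definition benefit :: "'a set \<Rightarrow> 'a \<Rightarrow> ('a \<Rightarrow> 'a) \<Rightarrow> ('a \<Rightarrow> 'x) \<Rightarrow> 'q set \<Rightarrow> ('q \<Rightarrow> real)
    \<Rightarrow> ('q \<Rightarrow> 'x set) \<Rightarrow> ('a \<Rightarrow> real) \<Rightarrow> 'a set \<Rightarrow> real" where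
  "benefit V r par var Q Pr Z c R = (\<Sum>w\<in>R. EI V r par var Q Pr Z w R * Ctot V r par c w)"

definition partial_benefit :: "'a set \<Rightarrow> 'a \<Rightarrow> ('a \<Rightarrow> 'a) \<Rightarrow> ('a \<Rightarrow> 'x) \<Rightarrow> 'q set \<Rightarrow> ('q \<Rightarrow> real)
    \<Rightarrow> ('q \<Rightarrow> 'x set) \<Rightarrow> ('a \<Rightarrow> real) \<Rightarrow> 'a \<Rightarrow> 'a set \<Rightarrow> real" where
  "partial_benefit V r par var Q Pr Z c u R =
     (\<Sum>w\<in>R \<inter> subtree V r par u. EI V r par var Q Pr Z w R * Ctot V r par c w)"

end

theory Submission
  imports Defs
begin

lemma det_edges:
  "(x,y) \<in> tree_edges V r par \<Longrightarrow> (x,y') \<in> tree_edges V r par \<Longrightarrow> y = y'"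
  by (auto simp: tree_edges_def)

lemma edge_V: "(x,y) \<in> tree_edges V r par \<Longrightarrow> x \<in> V \<and> x \<noteq> r"
  by (auto simp: tree_edges_def)

lemma chain_gen:
  assumes det: "\<And>x y y'. (x,y) \<in> E \<Longrightarrow> (x,y') \<in> E \<Longrightarrow> y = y'"
  shows "(w,a) \<in> E\<^sup>+ \<Longrightarrow> (w,b) \<in> E\<^sup>+ \<Longrightarrow> a = b \<or> (a,b) \<in> E\<^sup>+ \<or> (b,a) \<in> E\<^sup>+"
proof (induction rule: trancl_induct)
  case (base a)
  then obtain z where "(w,z) \<in> E" "(z,b) \<in> E\<^sup>*" using tranclD by metis
  with base det have "z = a" by blast
  then show ?case using \<open>(z,b) \<in> E\<^sup>*\<close> by (auto simp: rtrancl_eq_or_trancl)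
next
  case (step a a')
  from step.IH step.prems consider "a = b" | "(a,b) \<in> E\<^sup>+" | "(b,a) \<in> E\<^sup>+" by blast
  then show ?case
  proof cases
    case 1 then show ?thesis using step by auto
  next
    case 3 then show ?thesis using step by (meson trancl.trancl_into_trancl)
  next
    case 2
    then obtain z where "(a,z) \<in> E" "(z,b) \<in> E\<^sup>*" using tranclD by metis
    with step det have "z = a'" by blast
    then show ?thesis using \<open>(z,b) \<in> E\<^sup>*\<close> by (auto simp: rtrancl_eq_or_trancl)
  qed
qed

lemma acyc_gen:
  assumes det: "\<And>x y y'. (x,y) \<in> E \<Longrightarrow> (x,y') \<in> E \<Longrightarrow> y = y'"
    and noout: "\<And>y. (r,y) \<notin> E"
  shows "(x,r) \<in> E\<^sup>* \<Longrightarrow> (x,x) \<notin> E\<^sup>+"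
proof (induction rule: converse_rtrancl_induct)
  case base
  then show ?case using noout by (metis tranclD)
next
  case (step x y)
  show ?case
  proof
    assume "(x,x) \<in> E\<^sup>+"
    then obtain z where "(x,z) \<in> E" "(z,x) \<in> E\<^sup>*" using tranclD by metis
    with step det have "z = y" by blast
    with \<open>(z,x) \<in> E\<^sup>*\<close> step(1) have "(y,y) \<in> E\<^sup>+"
      by (meson rtrancl_into_trancl1)
    with step.IH show False by simp
  qed
qed

lemma acyc:
  assumes tree: "rooted_tree V r par"
  shows "x \<notin> anc V r par x"
proof
  assume a: "x \<in> anc V r par x"
  then have "(x,x) \<in> (tree_edges V r par)\<^sup>+" by (simp add: anc_def)
  then obtain z where "(x,z) \<in> tree_edges V r par" using tranclD by metis
  then have "x \<in> V" using edge_V by metis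
  then have "(x,r) \<in> (tree_edges V r par)\<^sup>*" using tree by (simp add: rooted_tree_def)
  have "(x,x) \<notin> (tree_edges V r par)\<^sup>+"
    by (rule acyc_gen[of "tree_edges V r par" r, OF _ _ \<open>(x,r) \<in> _\<close>])
       (auto simp: tree_edges_def)
  with a show False by (auto simp: anc_def)
qed

lemma anc_trans: "y \<in> anc V r par x \<Longrightarrow> z \<in> anc V r par y \<Longrightarrow> z \<in> anc V r par x"
  by (auto simp: anc_def)

lemma anc_V: "y \<in> anc V r par x \<Longrightarrow> x \<in> V"
  unfolding anc_def by (metis edge_V mem_Collect_eq tranclD)

lemma subtree_mono: "y \<in> anc V r par x \<Longrightarrow> subtree V r par x \<subseteq> subtree V r par y"
  unfolding subtree_def by (auto intro: anc_trans)

lemma vars_mono: "y \<in> anc V r par x \<Longrightarrow> vars V r par var x \<subseteq> vars V r par var y"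
  unfolding vars_def using subtree_mono[of y V r par x] by blast

lemma F3: "w \<notin> subtree V r par u \<Longrightarrow> w \<in> V \<Longrightarrow> x \<in> anc V r par w \<Longrightarrow> x \<notin> subtree V r par u"
  unfolding subtree_def by (auto intro: anc_trans)

lemma F4:
  assumes "w \<in> subtree V r par u" "x \<in> anc V r par w" "x \<notin> subtree V r par u" "u \<in> V"
  shows "x \<in> anc V r par u"
proof (cases "w = u")
  case True then show ?thesis using assms by simp
next
  case False
  then have wu: "u \<in> anc V r par w" using assms(1) by (simp add: subtree_def)
  have "u \<in> V" using assms(4) .
  from chain_gen[of "tree_edges V r par" w u x, OF det_edges] wu assms(2)
  have "u = x \<or> x \<in> anc V r par u \<or> u \<in> anc V r par x" by (auto simp: anc_def)
  moreover have "u \<noteq> x" using assms(3) \<open>u \<in> V\<close> by (auto simp: subtree_def)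
  moreover have "u \<notin> anc V r par x" using assms(3) anc_V[of u V r par x] by (auto simp: subtree_def)
  ultimately show ?thesis by blast
qed

theorem lemma3:
  fixes V :: "'a set" and r :: 'a and par :: "'a \<Rightarrow> 'a" and var :: "'a \<Rightarrow> 'x"
    and Q :: "'q set" and Pr :: "'q \<Rightarrow> real" and Z :: "'q \<Rightarrow> 'x set"
    and c :: "'a \<Rightarrow> real" and k :: nat and Ropt :: "'a set" and u :: 'a
    and v :: "'a option"
  assumes tree: "rooted_tree V r par"
    and Q_fin: "finite Q"
    and Pr_nonneg: "\<forall>q \<in> Q. Pr q \<ge> 0"
    and Pr_sum: "(\<Sum>q\<in>Q. Pr q) = 1"
    and k_pos: "0 < k"
    and Ropt_sub: "Ropt \<subseteq> V"
    and Ropt_card: "card Ropt \<le> k"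
    and Ropt_opt: "\<forall>R. R \<subseteq> V \<and> card R \<le> k \<longrightarrow>
                       benefit V r par var Q Pr Z c R \<le> benefit V r par var Q Pr Z c Ropt"
    and u_in: "u \<in> V"
    and v_none: "v = None \<longleftrightarrow> anc V r par u \<inter> Ropt = {}"
    and v_some: "\<forall>x. v = Some x \<longleftrightarrow>
                   (x \<in> anc V r par u \<inter> Ropt \<and>
                    (\<forall>y \<in> anc V r par u \<inter> Ropt. y = x \<or> y \<in> anc V r par x))"
  shows "(\<forall>Ru. Ru \<subseteq> subtree V r par u \<and> card Ru = card (Ropt \<inter> subtree V r par u) \<longrightarrow>
          partial_benefit V r par var Q Pr Z c u (Ru \<union> set_option v)
          \<le> partial_benefit V r par var Q Pr Z c u ((Ropt \<inter> subtree V r par u) \<union> set_option v))"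
proof (intro allI impI)
  fix Ru assume Ru: "Ru \<subseteq> subtree V r par u \<and> card Ru = card (Ropt \<inter> subtree V r par u)"
  define T where "T = subtree V r par u"
  define sv where "sv = set_option v"
  have finV: "finite V" using tree by (simp add: rooted_tree_def)
  have TV: "T \<subseteq> V" by (auto simp: T_def subtree_def)
  have vprops: "y \<in> anc V r par u \<and> y \<in> Ropt \<and> y \<notin> T \<and> (\<forall>w\<in>T. y \<in> anc V r par w)"
    if "v = Some y" for y
  proof -
    have y: "y \<in> anc V r par u" "y \<in> Ropt" using v_some that by auto
    have "y \<notin> T"
    proof
      assume "y \<in> T"
      then have "y = u \<or> u \<in> anc V r par y" by (simp add: T_def subtree_def)
      then show False using y acyc[OF tree] anc_trans by metis
    qed
    moreover have "\<forall>w\<in>T. y \<in> anc V r par w"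
      using y anc_trans by (auto simp: T_def subtree_def)
    ultimately show ?thesis using y by blast
  qed
  have svT: "sv \<inter> T = {}" using vprops by (cases v) (auto simp: sv_def)
  have key: "Iq V r par var Zq w S = Iq V r par var Zq w (X \<union> sv)"
    if S: "S \<inter> T = X" "S - T = Ropt - T" and w: "w \<in> T" for S X Zq w
  proof -
    have m: "w \<in> S \<longleftrightarrow> w \<in> X \<union> sv" using S w svT by blast
    have e: "(\<exists>x \<in> anc V r par w \<inter> S. vars V r par var x \<subseteq> Zq) \<longleftrightarrow>
             (\<exists>x \<in> anc V r par w \<inter> (X \<union> sv). vars V r par var x \<subseteq> Zq)"
    proof
      assume "\<exists>x \<in> anc V r par w \<inter> S. vars V r par var x \<subseteq> Zq"
      then obtain x where x: "x \<in> anc V r par w" "x \<in> S" "vars V r par var x \<subseteq> Zq" by blast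
      show "\<exists>x \<in> anc V r par w \<inter> (X \<union> sv). vars V r par var x \<subseteq> Zq"
      proof (cases "x \<in> T")
        case True then show ?thesis using x S by blast
      next
        case False
        then have xa: "x \<in> anc V r par u" using F4 w x(1) T_def u_in by metis
        have xR: "x \<in> Ropt" using S x(2) False by blast
        then obtain y where vy: "v = Some y" using v_none xa by (cases v) auto
        then have "x = y \<or> x \<in> anc V r par y" using v_some xa xR by blast
        then have "vars V r par var y \<subseteq> Zq" using vars_mono[of x V r par y var] x(3) by blast
        then show ?thesis using vprops[OF vy] w vy by (auto simp: sv_def)
      qed
    next
      assume "\<exists>x \<in> anc V r par w \<inter> (X \<union> sv). vars V r par var x \<subseteq> Zq"
      then obtain x where x: "x \<in> anc V r par w" "x \<in> X \<union> sv" "vars V r par var x \<subseteq> Zq" by blast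
      have "x \<in> S"
      proof (cases "x \<in> X")
        case True then show ?thesis using S by blast
      next
        case False
        then have "v = Some x" using x(2) by (cases v) (auto simp: sv_def)
        then show ?thesis using vprops S by blast
      qed
      then show "\<exists>x \<in> anc V r par w \<inter> S. vars V r par var x \<subseteq> Zq" using x by blast
    qed
    show ?thesis unfolding Iq_def using m e by simp
  qed
  define Out where "Out = (\<Sum>w\<in>Ropt - T. EI V r par var Q Pr Z w Ropt * Ctot V r par c w)"
  have decomp: "benefit V r par var Q Pr Z c S = partial_benefit V r par var Q Pr Z c u (X \<union> sv) + Out"
    if S: "S \<inter> T = X" "S - T = Ropt - T" "S \<subseteq> V" for S X
  proof -
    have finS: "finite S" using S(3) finV finite_subset by blast
    have "benefit V r par var Q Pr Z c S =
      (\<Sum>w\<in>S \<inter> T. EI V r par var Q Pr Z w S * Ctot V r par c w) +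
      (\<Sum>w\<in>S - T. EI V r par var Q Pr Z w S * Ctot V r par c w)"
      unfolding benefit_def using sum.Int_Diff[OF finS] by blast
    moreover have "(\<Sum>w\<in>S \<inter> T. EI V r par var Q Pr Z w S * Ctot V r par c w)
        = partial_benefit V r par var Q Pr Z c u (X \<union> sv)"
    proof -
      have "(X \<union> sv) \<inter> subtree V r par u = X" using S svT T_def by blast
      then show ?thesis unfolding partial_benefit_def EI_def
        using key[OF S(1,2)] S(1) by (auto intro!: sum.cong)
    qed
    moreover have "(\<Sum>w\<in>S - T. EI V r par var Q Pr Z w S * Ctot V r par c w) = Out"
    proof -
      have "EI V r par var Q Pr Z w S = EI V r par var Q Pr Z w Ropt" if w: "w \<in> Ropt - T" for w
      proof -
        have wV: "w \<in> V" using w Ropt_sub by blast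
        have "anc V r par w \<inter> S = anc V r par w \<inter> Ropt"
          using F3[of w V r par u] w wV S(2) T_def by blast
        moreover have "w \<in> S" using w S by blast
        ultimately show ?thesis unfolding EI_def Iq_def using w by simp
      qed
      then show ?thesis unfolding Out_def using S(2) by (auto intro!: sum.cong)
    qed
    ultimately show ?thesis by simp
  qed
  define R' where "R' = (Ropt - T) \<union> Ru"
  have RuT: "Ru \<subseteq> T" using Ru T_def by simp
  have R'1: "R' \<inter> T = Ru" "R' - T = Ropt - T" "R' \<subseteq> V"
    using RuT TV Ropt_sub by (auto simp: R'_def)
  have finR: "finite Ropt" using Ropt_sub finV finite_subset by blast
  have "card R' = card (Ropt - T) + card Ru"
    unfolding R'_def
    by (rule card_Un_disjoint) (use finR RuT TV finV finite_subset[of Ru V] in auto)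
  also have "\<dots> = card Ropt"
    using Ru T_def card_Diff_subset_Int[of T Ropt] finR
    by (metis add.commute card_Int_Diff inf_commute)
  finally have "card R' \<le> k" using Ropt_card by simp
  then have "benefit V r par var Q Pr Z c R' \<le> benefit V r par var Q Pr Z c Ropt"
    using Ropt_opt R'1 by blast
  moreover have "benefit V r par var Q Pr Z c R' = partial_benefit V r par var Q Pr Z c u (Ru \<union> sv) + Out"
    using decomp R'1 by blast
  moreover have "benefit V r par var Q Pr Z c Ropt =
      partial_benefit V r par var Q Pr Z c u ((Ropt \<inter> T) \<union> sv) + Out"
    using decomp Ropt_sub by blast
  ultimately show "partial_benefit V r par var Q Pr Z c u (Ru \<union> set_option v)
          \<le> partial_benefit V r par var Q Pr Z c u ((Ropt \<inter> subtree V r par u) \<union> set_option v)"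
    by (simp add: sv_def T_def)
qed

end
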